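(* Let $(D_n)_{n\geq1}$ be a sequence of non-empty finite sets of generalised digits, and suppose that the lengths and subdigits of all generalised digits in the sets $D_n$ are bounded. For a real $\gamma>1$, evaluate generalised digits at base $\gamma$ and let $\ell_n,u_n$ be the least and greatest elements of $D_n$, $\Delta_n=u_n-\ell_n$, and $\delta_n$ the largest gap between consecutive elements of $D_n$ ($\delta_n=0$ if $|D_n|=1$), all computed with respect to these values. Then for every real $\gamma$ such that $\mathrm{gr}(\bigoplus(\ell_n))\leq\gamma\leq\mathrm{gr}(\bigoplus(u_n))$ and $$\delta_n\leq\sum_{i=1}^\infty\Delta_{n+i}\,\gamma^{-i}\quad\text{for every } n\geq1,$$ there is a sequence $(a_n)$ with $a_n\in D_n$ for all $n$ such that $\gamma=\mathrm{gr}(\bigoplus(a_n))$.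
   Context: A generalised digit is a string $c_0.c_1\ldots c_k$ of non-negative integers (subdigits); its value in base $\gamma$ is $\sum_{i=0}^k c_i\gamma^{-i}$. A sequence $(a_n)_{n\geq1}$ of generalised digits, with $a_n=c^{(n)}_0.c^{(n)}_1\ldots c^{(n)}_{k_n}$, is equivalent to the integer sequence $(t_m)$ with $t_m=\sum_{n+i=m}c^{(n)}_i$ (i.e. $a_n$ contributes $c^{(n)}_i$ to position $n+i$); note $\sum_m t_m\gamma^{-m}=\sum_n a_n(\gamma)\gamma^{-n}$, where $a_n(\gamma)$ is the base-$\gamma$ value. For such a sequence, $\mathrm{gr}(\bigoplus(a_n))$ denotes the growth rate of the sum-closed permutation class $\bigoplus\mathcal{S}$ where $\mathcal{S}$ is a downward closed set of sum indecomposable permutations with $|\mathcal{S}_m|=t_m$; for bounded positive $(t_m)$ this is the unique real $\gamma>1$ with $\sum_m t_m\gamma^{-m}=1$. Here $\bigoplus\mathcal{S}$ is the set of permutations $\sigma_1\oplus\cdots\oplus\sigma_r$ with $\sigma_i\in\mathcal{S}$, $\sigma\oplus\tau$ being $\sigma$ followed by $\tau$ shifted up by the length of $\sigma$, and indecomposable means not such a sum of two shorter permutations. *)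

theory Defs
  imports Complex_Main "HOL-Library.Extended_Real"
begin

text \<open>A generalised digit c_0.c_1...c_k is a non-empty list of naturals [c_0,...,c_k].
  Its value in base g is the sum of c_i * g^(-i).\<close>
definition digval :: "real \<Rightarrow> nat list \<Rightarrow> real" where
  "digval g d = (\<Sum>i<length d. real (d ! i) * g powi (- int i))"

text \<open>The integer sequence t equivalent to a sequence (a_n)_{n>=1} of generalised digits:
  t_m = sum over n + i = m (n >= 1) of the i-th subdigit of a_n.\<close>
definition equiv_seq :: "(nat \<Rightarrow> nat list) \<Rightarrow> nat \<Rightarrow> nat" where
  "equiv_seq a m = (\<Sum>n\<in>{1..m}. if m - n < length (a n) then a n ! (m - n) else 0)"

definition comps :: "nat \<Rightarrow> nat list set" where
  "comps n = {ms. (\<forall>m\<in>set ms. 0 < m) \<and> sum_list ms = n}"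

text \<open>Number of permutations of length n in the sum closure of a set S of sum indecomposable
  permutations with |S_m| = t m: each such permutation is uniquely a sum of indecomposables,
  so the count is the sum over compositions of n of the products of the t's.\<close>
definition sum_closure_count :: "(nat \<Rightarrow> nat) \<Rightarrow> nat \<Rightarrow> nat" where
  "sum_closure_count t n = (\<Sum>ms\<in>comps n. prod_list (map t ms))"

definition gr_seq :: "(nat \<Rightarrow> nat) \<Rightarrow> real" where
  "gr_seq t = real_of_ereal (limsup (\<lambda>n. ereal (root n (real (sum_closure_count t n)))))"

definition gr :: "(nat \<Rightarrow> nat list) \<Rightarrow> real" where
  "gr a = gr_seq (equiv_seq a)"

definition maxgap :: "real set \<Rightarrow> real" where
  "maxgap V = (if card V \<le> 1 then 0 else
     Max {y - x | x y. x \<in> V \<and> y \<in> V \<and> x < y \<and> \<not> (\<exists>z\<in>V. x < z \<and> z < y)})"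

end

theory Submission
  imports Defs
begin


lemma comps_0: "comps 0 = {[]}"
  unfolding comps_def by (auto simp: sum_list_eq_0_iff) (case_tac x, auto)

lemma comps_sub: "comps n \<subseteq> {xs. set xs \<subseteq> {0..n} \<and> length xs \<le> n}"
proof
  fix xs assume "xs \<in> comps n"
  then have pos: "\<forall>m\<in>set xs. 0 < m" and s: "sum_list xs = n" by (auto simp: comps_def)
  have "\<forall>m\<in>set xs. m \<le> n" using s member_le_sum_list by blast
  moreover have "length xs \<le> sum_list xs" using pos
    by (induction xs) auto
  ultimately show "xs \<in> {xs. set xs \<subseteq> {0..n} \<and> length xs \<le> n}" using s by auto
qed

lemma finite_comps: "finite (comps n)"
  by (rule finite_subset[OF comps_sub finite_lists_length_le]) auto

lemma comps_Suc: "comps (Suc n) = (\<lambda>(m,ys). m # ys) ` (SIGMA m:{1..Suc n}. comps (Suc n - m))"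
proof (rule set_eqI, rule iffI)
  fix xs assume xs: "xs \<in> comps (Suc n)"
  then obtain m ys where "xs = m # ys" unfolding comps_def by (cases xs) auto
  with xs show "xs \<in> (\<lambda>(m,ys). m # ys) ` (SIGMA m:{1..Suc n}. comps (Suc n - m))"
    unfolding comps_def by (auto intro!: image_eqI[of _ _ "(m,ys)"])
next
  fix xs assume "xs \<in> (\<lambda>(m,ys). m # ys) ` (SIGMA m:{1..Suc n}. comps (Suc n - m))"
  then show "xs \<in> comps (Suc n)" unfolding comps_def by auto
qed

lemma count_0: "sum_closure_count t 0 = 1"
  by (simp add: sum_closure_count_def comps_0)

lemma count_Suc: "sum_closure_count t (Suc n) = (\<Sum>m\<in>{1..Suc n}. t m * sum_closure_count t (Suc n - m))"
proof -
  have inj: "inj_on (\<lambda>(m,ys). m # ys) (SIGMA m:{1..Suc n}. comps (Suc n - m))"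
    by (auto simp: inj_on_def)
  have "sum_closure_count t (Suc n) = (\<Sum>(m,ys)\<in>(SIGMA m:{1..Suc n}. comps (Suc n - m)). prod_list (map t (m # ys)))"
    unfolding sum_closure_count_def comps_Suc by (subst sum.reindex[OF inj]) (simp add: case_prod_unfold)
  also have "\<dots> = (\<Sum>m\<in>{1..Suc n}. \<Sum>ys\<in>comps (Suc n - m). t m * prod_list (map t ys))"
    by (subst sum.Sigma[symmetric]) (auto simp: finite_comps)
  also have "\<dots> = (\<Sum>m\<in>{1..Suc n}. t m * sum_closure_count t (Suc n - m))"
    by (simp add: sum_closure_count_def sum_distrib_left)
  finally show ?thesis .
qed

lemma e_rec:
  fixes t :: "nat \<Rightarrow> nat" and y :: real
  assumes "n > 0"
  shows "real (sum_closure_count t n) * y^n =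
    (\<Sum>m\<in>{1..n}. (real (t m) * y^m) * (real (sum_closure_count t (n-m)) * y^(n-m)))"
proof -
  obtain k where n: "n = Suc k" using assms by (cases n) auto
  have "real (sum_closure_count t n) * y^n = (\<Sum>m\<in>{1..n}. real (t m) * real (sum_closure_count t (n-m)) * y^n)"
    by (simp only: n count_Suc of_nat_sum of_nat_mult sum_distrib_right)
  also have "\<dots> = (\<Sum>m\<in>{1..n}. (real (t m) * y^m) * (real (sum_closure_count t (n-m)) * y^(n-m)))"
  proof (rule sum.cong)
    fix m assume "m \<in> {1..n}"
    then have "y^n = y^m * y^(n-m)" by (simp add: power_add[symmetric])
    then show "real (t m) * real (sum_closure_count t (n-m)) * y^n = (real (t m) * y^m) * (real (sum_closure_count t (n-m)) * y^(n-m))"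
      by (simp add: algebra_simps)
  qed simp
  finally show ?thesis .
qed

lemma countB:
  fixes t :: "nat \<Rightarrow> nat" and x :: real
  assumes x: "x > 0" and sm: "summable (\<lambda>m. real (t m) * x^m)"
    and le1: "(\<Sum>m. real (t m) * x^m) \<le> 1"
  shows "real (sum_closure_count t n) * x^n \<le> 1"
proof (induction n rule: less_induct)
  case (less n)
  show ?case
  proof (cases "n = 0")
    case True then show ?thesis by (simp add: count_0)
  next
    case False
    have nn: "0 \<le> real (t m) * x^m" for m using x by simp
    have "real (sum_closure_count t n) * x^n =
      (\<Sum>m\<in>{1..n}. (real (t m) * x^m) * (real (sum_closure_count t (n-m)) * x^(n-m)))"
      using False by (simp add: e_rec)
    also have "\<dots> \<le> (\<Sum>m\<in>{1..n}. real (t m) * x^m)"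
    proof (rule sum_mono)
      fix m assume m: "m \<in> {1..n}"
      then have "real (sum_closure_count t (n-m)) * x^(n-m) \<le> 1" using less by auto
      then show "(real (t m) * x^m) * (real (sum_closure_count t (n-m)) * x^(n-m)) \<le> real (t m) * x^m"
        using nn[of m] by (simp add: mult_left_le)
    qed
    also have "\<dots> \<le> (\<Sum>m<Suc n. real (t m) * x^m)"
      by (rule sum_mono2) (auto simp: nn)
    also have "\<dots> \<le> (\<Sum>m. real (t m) * x^m)"
      by (rule sum_le_suminf[OF sm]) (auto simp: nn)
    finally show ?thesis using le1 by linarith
  qed
qed

lemma ls_upper:
  fixes t :: "nat \<Rightarrow> nat" and x :: real
  assumes x: "x > 0" and b: "\<And>n. real (sum_closure_count t n) * x^n \<le> 1"
  shows "limsup (\<lambda>n. ereal (root n (real (sum_closure_count t n)))) \<le> ereal (1/x)"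
proof (rule Limsup_bounded, rule always_eventually, rule allI)
  fix n
  show "ereal (root n (real (sum_closure_count t n))) \<le> ereal (1/x)"
  proof (cases "n = 0")
    case True then show ?thesis using x by simp
  next
    case False
    have "real (sum_closure_count t n) \<le> (1/x)^n"
      using b[of n] x by (simp add: field_simps power_divide)
    then have "root n (real (sum_closure_count t n)) \<le> root n ((1/x)^n)"
      using False by (simp add: real_root_le_iff)
    also have "\<dots> = 1/x" using False x by (simp add: real_root_power_cancel)
    finally show ?thesis by simp
  qed
qed

lemma ls_nonneg:
  "0 \<le> limsup (\<lambda>n. ereal (root n (real (sum_closure_count t n))))"
  by (rule le_Limsup) (auto intro!: always_eventually real_root_ge_zero)

lemma ls_lower:
  fixes t :: "nat \<Rightarrow> nat" and y :: real
  assumes y: "y > 0" and ns: "\<not> summable (\<lambda>n. real (sum_closure_count t n) * y^n)"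
  shows "ereal (1/y) \<le> limsup (\<lambda>n. ereal (root n (real (sum_closure_count t n))))"
proof (rule ccontr)
  assume "\<not> ?thesis"
  then have "limsup (\<lambda>n. ereal (root n (real (sum_closure_count t n)))) < ereal (1/y)" by simp
  then obtain \<rho> where r1: "limsup (\<lambda>n. ereal (root n (real (sum_closure_count t n)))) < ereal \<rho>"
      and r2: "ereal \<rho> < ereal (1/y)"
    using ereal_dense2 by blast
  have ev: "eventually (\<lambda>n. ereal (root n (real (sum_closure_count t n))) < ereal \<rho>) sequentially"
    using Limsup_lessD[OF r1] .
  have key: "norm (real (sum_closure_count t n) * y^n) \<le> (\<rho>*y)^n"
    if n: "0 < n" and lt: "ereal (root n (real (sum_closure_count t n))) < ereal \<rho>" for n
  proof -
    have lt': "root n (real (sum_closure_count t n)) < \<rho>" using lt by simp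
    have "0 \<le> root n (real (sum_closure_count t n))" by (simp add: real_root_ge_zero)
    then have "(root n (real (sum_closure_count t n)))^n \<le> \<rho>^n"
      using lt' by (intro power_mono) auto
    then have "real (sum_closure_count t n) \<le> \<rho>^n" using n by (simp add: real_root_pow_pos2)
    then show "norm (real (sum_closure_count t n) * y^n) \<le> (\<rho>*y)^n"
      using y by (simp add: power_mult_distrib mult_right_mono)
  qed
  have ev2: "eventually (\<lambda>n. norm (real (sum_closure_count t n) * y^n) \<le> (\<rho>*y)^n) sequentially"
    using ev eventually_gt_at_top[of "0::nat"] by eventually_elim (rule key)
  have "\<rho> * y < 1" using r2 y by (simp add: field_simps)
  moreover have "0 \<le> \<rho>"
  proof -
    obtain n where "0 < n" "root n (real (sum_closure_count t n)) < \<rho>"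
      using eventually_happens'[OF _ eventually_conj[OF ev eventually_gt_at_top[of 0]]] by auto
    moreover have "0 \<le> root n (real (sum_closure_count t n))" by (simp add: real_root_ge_zero)
    ultimately show ?thesis by linarith
  qed
  ultimately have "summable (\<lambda>n. (\<rho>*y)^n)" using y by (intro summable_geometric) simp
  then have "summable (\<lambda>n. real (sum_closure_count t n) * y^n)"
    using summable_comparison_test_ev[OF ev2] by blast
  with ns show False by simp
qed



lemma S_identity:
  fixes t :: "nat \<Rightarrow> nat" and y :: real
  defines "e \<equiv> \<lambda>n. real (sum_closure_count t n) * y^n"
  defines "w \<equiv> \<lambda>m. real (t m) * y^m"
  defines "S \<equiv> \<lambda>N. \<Sum>n<N. e n"
  shows "S (Suc N) = 1 + (\<Sum>m\<in>{1..N}. w m * S (Suc N - m))"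
proof (induction N)
  case 0 then show ?case by (simp add: S_def e_def count_0)
next
  case (Suc N)
  have er: "e (Suc N) = (\<Sum>m\<in>{1..Suc N}. w m * e (Suc N - m))"
    unfolding e_def w_def by (rule e_rec) simp
  have "(\<Sum>m\<in>{1..Suc N}. w m * S (Suc (Suc N) - m))
      = (\<Sum>m\<in>{1..Suc N}. w m * S (Suc N - m) + w m * e (Suc N - m))"
  proof (rule sum.cong)
    fix m assume "m \<in> {1..Suc N}"
    then have "Suc (Suc N) - m = Suc (Suc N - m)" by auto
    then show "w m * S (Suc (Suc N) - m) = w m * S (Suc N - m) + w m * e (Suc N - m)"
      by (simp add: S_def algebra_simps)
  qed simp
  also have "\<dots> = (\<Sum>m\<in>{1..Suc N}. w m * S (Suc N - m)) + e (Suc N)"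
    by (simp add: sum.distrib er)
  also have "(\<Sum>m\<in>{1..Suc N}. w m * S (Suc N - m)) = (\<Sum>m\<in>{1..N}. w m * S (Suc N - m))"
    by (simp add: S_def)
  finally show ?case using Suc by (simp add: S_def)
qed

lemma divergeA:
  fixes t :: "nat \<Rightarrow> nat" and y :: real
  assumes y: "y > 0" and t0: "t 0 = 0" and M: "1 \<le> (\<Sum>m<M. real (t m) * y^m)"
  shows "\<not> summable (\<lambda>n. real (sum_closure_count t n) * y^n)"
proof
  define e where "e = (\<lambda>n. real (sum_closure_count t n) * y^n)"
  define w where "w = (\<lambda>m. real (t m) * y^m)"
  define S where "S = (\<lambda>N. \<Sum>n<N. e n)"
  assume sm: "summable (\<lambda>n. real (sum_closure_count t n) * y^n)"
  have e0: "0 \<le> e n" for n using y by (simp add: e_def)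
  have w0: "0 \<le> w n" for n using y by (simp add: w_def)
  have Smono: "S a \<le> S b" if "a \<le> b" for a b
    unfolding S_def by (rule sum_mono2) (use that e0 in auto)
  have S0: "0 \<le> S a" for a unfolding S_def by (simp add: sum_nonneg e0)
  have Mpos: "M \<ge> 1" using M by (cases M) auto
  have step: "S (Suc N) \<ge> 1 + S (Suc N - M)" if N: "N \<ge> M" for N
  proof -
    have i1: "S (Suc N) = 1 + (\<Sum>m\<in>{1..N}. w m * S (Suc N - m))"
      unfolding S_def e_def w_def by (rule S_identity)
    have i2: "(\<Sum>m\<in>{1..N}. w m * S (Suc N - m)) \<ge> (\<Sum>m\<in>{1..<M}. w m * S (Suc N - m))"
      by (rule sum_mono2) (use N w0 S0 in auto)
    have i3: "(\<Sum>m\<in>{1..<M}. w m * S (Suc N - m)) \<ge> (\<Sum>m\<in>{1..<M}. w m * S (Suc N - M))"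
      by (rule sum_mono) (use w0 in \<open>auto intro!: mult_left_mono Smono\<close>)
    have i4: "(\<Sum>m\<in>{1..<M}. w m * S (Suc N - M)) = (\<Sum>m<M. w m) * S (Suc N - M)"
    proof -
      have "(\<Sum>m<M. w m) = (\<Sum>m\<in>{1..<M}. w m)"
        using t0 Mpos by (simp add: w_def lessThan_atLeast0 sum.atLeast_Suc_lessThan)
      then show ?thesis by (simp add: sum_distrib_right)
    qed
    have i5: "(\<Sum>m<M. w m) * S (Suc N - M) \<ge> S (Suc N - M)" using M S0[of "Suc N - M"] unfolding w_def by (metis mult_le_cancel_right1 not_less)
    from i1 i2 i3 i4 i5 show ?thesis by linarith
  qed
  have big: "S (Suc (k * M)) \<ge> real k + 1" for k
  proof (induction k)
    case 0 then show ?case by (simp add: S_def e_def count_0)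
  next
    case (Suc k)
    have "S (Suc (Suc k * M)) \<ge> 1 + S (Suc (Suc k * M) - M)" by (rule step) simp
    moreover have "Suc (Suc k * M) - M = Suc (k * M)" by simp
    ultimately show ?case using Suc by simp
  qed
  have le: "S N \<le> suminf e" for N
    unfolding S_def using sm e0 by (intro sum_le_suminf) (auto simp: e_def)
  obtain k :: nat where "suminf e < real k" using reals_Archimedean2 by blast
  with big[of k] le[of "Suc (k*M)"] show False by simp
qed



lemma ls_finite:
  fixes t :: "nat \<Rightarrow> nat"
  assumes K: "\<And>m. t m \<le> K" and t0: "t 0 = 0"
  shows "limsup (\<lambda>n. ereal (root n (real (sum_closure_count t n)))) \<le> ereal (1 / (1/(4*real K+4)))"
proof -
  define x0 :: real where "x0 = 1/(4*real K+4)"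
  have x0: "0 < x0" "x0 \<le> 1/4" "real K * x0 \<le> 1/4" by (auto simp: x0_def field_simps)
  have bnd: "norm (real (t m) * x0^m) \<le> (1/2::real)^Suc m" for m
  proof (cases m)
    case 0 then show ?thesis using t0 by simp
  next
    case (Suc k)
    have "real (t m) * x0^m \<le> real K * x0^m" using K[of m] x0 by (intro mult_right_mono) auto
    also have "\<dots> = (real K * x0) * x0^k" using Suc by simp
    also have "\<dots> \<le> (1/4) * (1/2)^k"
      using x0 by (intro mult_mono power_mono) auto
    also have "\<dots> = (1/2::real)^Suc m" using Suc by simp
    finally show ?thesis using x0 by simp
  qed
  have bnd': "real (t m) * x0^m \<le> (1/2::real)^Suc m" for m
    by (metis bnd abs_ge_self order_trans real_norm_def)
  have sm: "summable (\<lambda>m. real (t m) * x0^m)"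
    by (rule summable_comparison_test[OF _ sums_summable[OF power_half_series]]) (use bnd in auto)
  have "(\<Sum>m. real (t m) * x0^m) \<le> (\<Sum>m. (1/2::real)^Suc m)"
    by (rule suminf_le) (use bnd' sm sums_summable[OF power_half_series] in auto)
  also have "\<dots> = 1" using power_half_series sums_unique by metis
  finally have "(\<Sum>m. real (t m) * x0^m) \<le> 1" .
  then have "\<And>n. real (sum_closure_count t n) * x0^n \<le> 1" using countB x0 sm by blast
  then show ?thesis using ls_upper x0 unfolding x0_def by blast
qed

lemma real_ereal_le: "0 \<le> z \<Longrightarrow> z \<le> ereal b \<Longrightarrow> real_of_ereal z \<le> b"
  by (cases z) auto

lemma real_ereal_ge: "ereal a \<le> z \<Longrightarrow> z \<le> ereal b \<Longrightarrow> a \<le> real_of_ereal z"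
  by (cases z) auto

lemma G1:
  fixes t :: "nat \<Rightarrow> nat" and x :: real
  assumes x: "x > 0" and sm: "summable (\<lambda>m. real (t m) * x^m)"
    and le1: "(\<Sum>m. real (t m) * x^m) \<le> 1"
  shows "gr_seq t \<le> 1/x"
  unfolding gr_seq_def
  by (rule real_ereal_le[OF ls_nonneg ls_upper[OF x countB[OF x sm le1]]])

lemma G2:
  fixes t :: "nat \<Rightarrow> nat" and y :: real
  assumes K: "\<And>m. t m \<le> K" and t0: "t 0 = 0" and y: "y > 0"
    and M: "1 \<le> (\<Sum>m<M. real (t m) * y^m)"
  shows "1/y \<le> gr_seq t"
  unfolding gr_seq_def
  by (rule real_ereal_ge[OF ls_lower[OF y divergeA[OF y t0 M]] ls_finite[of t K, OF K t0]])



lemma digval_eq: "g > 0 \<Longrightarrow> digval g d = (\<Sum>i<length d. real (d!i) * (1/g)^i)"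
  unfolding digval_def by (simp add: power_int_minus power_one_over power_inverse divide_inverse)

lemma equiv_seq_L:
  fixes a :: "nat \<Rightarrow> nat list"
  assumes len: "\<forall>n\<ge>1. length (a n) \<le> L"
  shows "equiv_seq a m = (\<Sum>i<L. if i < m then (if i < length (a (m-i)) then a (m-i) ! i else 0) else 0)"
proof -
  define cc where "cc = (\<lambda>n i. if i < length (a n) then a n ! i else 0)"
  have lenm: "\<And>i. i < m \<Longrightarrow> length (a (m-i)) \<le> L" using len by auto
  have "equiv_seq a m = (\<Sum>n\<in>{1..m}. cc n (m-n))" unfolding equiv_seq_def cc_def by simp
  also have "\<dots> = (\<Sum>i<m. cc (m-i) i)"
    by (rule sum.reindex_bij_witness[of _ "\<lambda>i. m - i" "\<lambda>n. m - n"]) auto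
  also have "\<dots> = (\<Sum>i\<in>{..<m} \<inter> {..<L}. cc (m-i) i)"
    by (rule sum.mono_neutral_right) (auto simp: cc_def dest: lenm)
  also have "\<dots> = (\<Sum>i\<in>{..<L} \<inter> {..<m}. cc (m-i) i)" by (simp add: Int_commute)
  also have "\<dots> = (\<Sum>i<L. if i < m then cc (m-i) i else 0)"
    by (subst sum.inter_restrict) auto
  finally show ?thesis unfolding cc_def .
qed

lemma dig_L:
  assumes "length d \<le> L"
  shows "(\<Sum>i<length d. real (d!i) * x^i) = (\<Sum>i<L. real (if i < length d then d ! i else 0) * x^i)"
  by (rule sum.mono_neutral_cong_left) (use assms in auto)

lemma series_S:
  fixes a :: "nat \<Rightarrow> nat list" and x :: real
  assumes x: "0 < x" "x < 1" and len: "\<forall>n\<ge>1. length (a n) \<le> L"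
    and ent: "\<forall>n\<ge>1. \<forall>c\<in>set (a n). c \<le> B"
  shows "(\<lambda>m. real (equiv_seq a m) * x^m) sums
           (\<Sum>k. (\<Sum>i<length (a (Suc k)). real (a (Suc k) ! i) * x^i) * x^(Suc k))"
proof -
  define cc where "cc = (\<lambda>n i. if i < length (a n) then a n ! i else 0)"
  have ccB: "cc n i \<le> B" if "n \<ge> 1" for n i
    using ent that unfolding cc_def by (auto simp: nth_mem)
  define h where "h = (\<lambda>i k. real (cc (Suc k) i) * x^(Suc k))"
  have hs: "summable (h i)" for i
  proof (rule summable_comparison_test[of _ "\<lambda>k. real B * x^(Suc k)"])
    show "\<exists>N. \<forall>n\<ge>N. norm (h i n) \<le> real B * x ^ Suc n"
      using ccB x by (auto simp: h_def intro!: mult_right_mono)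
    show "summable (\<lambda>k. real B * x ^ Suc k)" using x
      by (intro summable_mult summable_mult2) (auto intro!: summable_geometric)
  qed
  have E3: "(\<lambda>m. if i < m then real (cc (m-i) i) * x^m else 0) sums (x^i * suminf (h i))" for i
  proof -
    have "(\<lambda>k. x^i * h i k) sums (x^i * suminf (h i))" using sums_mult[OF summable_sums[OF hs]] .
    moreover have "(\<lambda>k. x^i * h i k) = (\<lambda>k. (\<lambda>m. if i < m then real (cc (m-i) i) * x^m else 0) (k + Suc i))"
      by (auto simp: h_def power_add[symmetric] algebra_simps)
    ultimately have "(\<lambda>k. (\<lambda>m. if i < m then real (cc (m-i) i) * x^m else 0) (k + Suc i)) sums (x^i * suminf (h i))"
      by simp
    then show ?thesis by (subst (asm) sums_iff_shift) simp
  qed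
  have "(\<lambda>m. \<Sum>i<L. if i < m then real (cc (m-i) i) * x^m else 0) sums (\<Sum>i<L. x^i * suminf (h i))"
    by (rule sums_sum) (rule E3)
  moreover have "(\<lambda>m. \<Sum>i<L. if i < m then real (cc (m-i) i) * x^m else 0) = (\<lambda>m. real (equiv_seq a m) * x^m)"
  proof
    fix m
    show "(\<Sum>i<L. if i < m then real (cc (m-i) i) * x^m else 0) = real (equiv_seq a m) * x^m"
      unfolding equiv_seq_L[OF len, of m] cc_def of_nat_sum sum_distrib_right by (intro sum.cong) auto
  qed
  moreover have "(\<Sum>i<L. x^i * suminf (h i)) = (\<Sum>k. (\<Sum>i<length (a (Suc k)). real (a (Suc k) ! i) * x^i) * x^(Suc k))"
  proof -
    have "(\<Sum>i<L. x^i * suminf (h i)) = (\<Sum>i<L. \<Sum>k. x^i * h i k)"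
      by (simp add: suminf_mult hs)
    also have "\<dots> = (\<Sum>k. \<Sum>i<L. x^i * h i k)"
      by (rule suminf_sum[symmetric]) (simp add: summable_mult hs)
    also have "\<dots> = (\<Sum>k. (\<Sum>i<length (a (Suc k)). real (a (Suc k) ! i) * x^i) * x^(Suc k))"
    proof (rule arg_cong[where f=suminf], rule ext)
      fix k
      have "(\<Sum>i<length (a (Suc k)). real (a (Suc k) ! i) * x^i) = (\<Sum>i<L. real (cc (Suc k) i) * x^i)"
        unfolding cc_def by (rule dig_L) (use len in auto)
      then show "(\<Sum>i<L. x^i * h i k) = (\<Sum>i<length (a (Suc k)). real (a (Suc k) ! i) * x^i) * x^(Suc k)"
        by (simp add: h_def sum_distrib_left sum_distrib_right mult_ac)
    qed
    finally show ?thesis .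
  qed
  ultimately show ?thesis by simp
qed

lemma equiv_seq_bound:
  fixes a :: "nat \<Rightarrow> nat list"
  assumes len: "\<forall>n\<ge>1. length (a n) \<le> L" and ent: "\<forall>n\<ge>1. \<forall>c\<in>set (a n). c \<le> B"
  shows "equiv_seq a m \<le> L * B"
proof -
  have entm: "\<And>i. i < m \<Longrightarrow> i < length (a (m-i)) \<Longrightarrow> a (m-i) ! i \<le> B"
  proof -
    fix i assume "i < m" "i < length (a (m-i))"
    then have "m - i \<ge> 1" "a (m-i) ! i \<in> set (a (m-i))" by (auto simp: nth_mem)
    then show "a (m-i) ! i \<le> B" using ent by blast
  qed
  have "equiv_seq a m \<le> (\<Sum>i<L. B)"
    unfolding equiv_seq_L[OF len, of m]
    by (rule sum_mono) (use entm in \<open>auto simp: nth_mem\<close>)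
  then show ?thesis by simp
qed

lemma equiv_seq_0: "equiv_seq a 0 = 0"
  by (simp add: equiv_seq_def)



lemma partial_gt:
  fixes f :: "nat \<Rightarrow> real"
  assumes "f sums F" "c < F"
  shows "\<exists>M. c < (\<Sum>m<M. f m)"
proof -
  have "eventually (\<lambda>n. c < (\<Sum>m<n. f m)) sequentially"
    using order_tendstoD(1)[OF assms(1)[unfolded sums_def] assms(2)] .
  then show ?thesis by (auto simp: eventually_sequentially)
qed

lemma CL:
  fixes t :: "nat \<Rightarrow> nat" and x :: real
  assumes K: "\<And>m. t m \<le> K" and t0: "t 0 = 0" and x: "0 < x" "x < 1"
    and s: "(\<lambda>m. real (t m) * x^m) sums F" and g: "gr_seq t \<le> 1/x"
  shows "F \<le> 1"
proof (rule ccontr)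
  assume "\<not> F \<le> 1"
  then obtain M where P1: "1 < (\<Sum>m<M. real (t m) * x^m)" using partial_gt[OF s] by force
  define P where "P = (\<Sum>m<M. real (t m) * x^m)"
  have M0: "M > 0" using P1 by (cases M) auto
  define \<theta> where "\<theta> = root M (1/P)"
  have Ppos: "P > 1" using P1 P_def by simp
  have th0: "0 < \<theta>" using Ppos M0 by (simp add: \<theta>_def)
  have th1: "\<theta> < 1" using Ppos M0 by (simp add: \<theta>_def)
  have thM: "\<theta>^M = 1/P" using Ppos M0 by (simp add: \<theta>_def real_root_pow_pos)
  have "1 = \<theta>^M * P" using thM Ppos by simp
  also have "\<dots> = (\<Sum>m<M. real (t m) * x^m * \<theta>^M)" by (simp add: P_def sum_distrib_left mult_ac)
  also have "\<dots> \<le> (\<Sum>m<M. real (t m) * (x * \<theta>)^m)"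
  proof (rule sum_mono)
    fix m assume "m \<in> {..<M}"
    then have "\<theta>^M \<le> \<theta>^m" using th0 th1 by (intro power_decreasing) auto
    then have h1: "x^m * \<theta>^M \<le> x^m * \<theta>^m" using x by (simp add: mult_left_mono)
    have "real (t m) * (x^m * \<theta>^M) \<le> real (t m) * (x^m * \<theta>^m)" using h1 by (simp add: mult_left_mono)
    then show "real (t m) * x^m * \<theta>^M \<le> real (t m) * (x * \<theta>)^m"
      by (simp add: power_mult_distrib mult_ac)
  qed
  finally have "1/(x*\<theta>) \<le> gr_seq t" using G2[of t K, OF K t0] x th0 by simp
  moreover have "1/x < 1/(x*\<theta>)" using x th0 th1 by (simp add: field_simps)
  ultimately show False using g by simp
qed

lemma CU:
  fixes t :: "nat \<Rightarrow> nat" and x :: real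
  assumes K: "\<And>m. t m \<le> K" and x: "0 < x" "x < 1"
    and s: "(\<lambda>m. real (t m) * x^m) sums F" and g: "1/x \<le> gr_seq t"
  shows "1 \<le> F"
proof (rule ccontr)
  assume F: "\<not> 1 \<le> F"
  define f where "f = (\<lambda>z::real. \<Sum>n. real (t n) * z^n)"
  have smz: "summable (\<lambda>n. real (t n) * z^n)" if "0 \<le> z" "z < 1" for z
  proof (rule summable_comparison_test[of _ "\<lambda>n. real K * z^n"])
    show "\<exists>N. \<forall>n\<ge>N. norm (real (t n) * z ^ n) \<le> real K * z ^ n"
      using K that by (auto intro!: mult_right_mono)
    show "summable (\<lambda>n. real K * z ^ n)" using that by (intro summable_mult summable_geometric) auto
  qed
  define Kp where "Kp = (1 + x)/2"
  have Kp: "x < Kp" "Kp < 1" using x by (auto simp: Kp_def)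
  have "isCont f x" unfolding f_def
    by (rule isCont_powser[of _ Kp]) (use smz Kp x in auto)
  then have "(f \<longlongrightarrow> f x) (at x)" by (simp add: isCont_def)
  moreover have "f x = F" using s by (simp add: f_def sums_iff)
  ultimately have "eventually (\<lambda>z. f z < 1) (at x)" using F by (simp add: order_tendstoD(2))
  then obtain d where d: "d > 0" "\<And>z. z \<noteq> x \<Longrightarrow> dist z x < d \<Longrightarrow> f z < 1"
    by (auto simp: eventually_at)
  define mm where "mm = min d (Kp - x)"
  define z where "z = x + mm / 2"
  have mn: "0 < mm" "mm \<le> d" "mm \<le> Kp - x" using d Kp by (auto simp: mm_def)
  have z1: "x < z" "dist z x < d" using mn by (auto simp: z_def dist_real_def)
  have z2: "z < 1" unfolding z_def using mn(3) Kp by linarith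
  note z = z1(1) z2 z1(2)
  have "f z < 1" using d z by auto
  then have "gr_seq t \<le> 1/z" using G1[of z t] smz[of z] z x unfolding f_def by simp
  moreover have "1/z < 1/x" using z x by (simp add: field_simps)
  ultimately show False using g by simp
qed

lemma EQ:
  fixes t :: "nat \<Rightarrow> nat" and x :: real
  assumes K: "\<And>m. t m \<le> K" and t0: "t 0 = 0" and x: "0 < x" "x < 1"
    and s: "(\<lambda>m. real (t m) * x^m) sums 1"
  shows "gr_seq t = 1/x"
proof (rule antisym)
  show "gr_seq t \<le> 1/x" using G1[OF x(1)] s by (simp add: sums_iff)
  show "1/x \<le> gr_seq t"
  proof (rule field_le_mult_one_interval)
    fix \<theta> :: real assume th: "0 < \<theta>" "\<theta> < 1"
    obtain M where M: "\<theta> < (\<Sum>m<M. real (t m) * x^m)" using partial_gt[OF s th(2)] by blast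
    have "1 \<le> (\<Sum>m<M. real (t m) * x^m) / \<theta>" using M th by simp
    also have "\<dots> = (\<Sum>m<M. real (t m) * x^m / \<theta>)" by (simp add: sum_divide_distrib)
    also have "\<dots> \<le> (\<Sum>m<M. real (t m) * (x/\<theta>)^m)"
    proof (rule sum_mono)
      fix m assume "m \<in> {..<M}"
      show "real (t m) * x^m / \<theta> \<le> real (t m) * (x/\<theta>)^m"
      proof (cases m)
        case 0 then show ?thesis using t0 by simp
      next
        case (Suc k)
        have "\<theta>^m \<le> \<theta>" using th Suc by (simp add: mult_le_cancel_left1 power_le_one)
        then have h0: "1/\<theta> \<le> 1/\<theta>^m" using th by (simp add: frac_le)
        have h1: "x^m * (1/\<theta>) \<le> x^m * (1/\<theta>^m)" by (rule mult_left_mono[OF h0]) (use x in simp)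
        have h2: "real (t m) * (x^m * (1/\<theta>)) \<le> real (t m) * (x^m * (1/\<theta>^m))" by (rule mult_left_mono[OF h1]) simp
        have e1: "real (t m) * x^m / \<theta> = real (t m) * (x^m * (1/\<theta>))" by simp
        have e2: "real (t m) * (x/\<theta>)^m = real (t m) * (x^m * (1/\<theta>^m))" by (simp add: power_divide)
        show ?thesis unfolding e1 e2 by (rule h2)
      qed
    qed
    finally have "1/(x/\<theta>) \<le> gr_seq t" using G2[of t K, OF K t0, of "x/\<theta>"] x th by simp
    then show "\<theta> * (1/x) \<le> gr_seq t" by simp
  qed
qed



lemma gap_le:
  fixes V :: "real set"
  assumes fin: "finite V" and ab: "a \<in> V" "b \<in> V" "a < b" and no: "\<not> (\<exists>z\<in>V. a < z \<and> z < b)"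
  shows "b - a \<le> maxgap V"
proof -
  have "card {a, b} \<le> card V" using ab fin by (intro card_mono) auto
  then have c: "\<not> card V \<le> 1" using ab by auto
  define S where "S = {y - x | x y. x \<in> V \<and> y \<in> V \<and> x < y \<and> \<not> (\<exists>z\<in>V. x < z \<and> z < y)}"
  have "S \<subseteq> (\<lambda>(x, y). y - x) ` (V \<times> V)" unfolding S_def by auto
  then have "finite S" using fin by (meson finite_SigmaI finite_imageI finite_subset)
  moreover have "b - a \<in> S" unfolding S_def using ab no by blast
  ultimately have "b - a \<le> Max S" by simp
  then show ?thesis using c unfolding maxgap_def S_def by simp
qed

lemma pw_eq: "(g::real) > 0 \<Longrightarrow> g powi (- int k) = (1/g)^k"
  by (simp add: power_int_minus power_int_of_nat power_one_over inverse_eq_divide)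



theorem lemma3p4:
  fixes D :: "nat \<Rightarrow> nat list set" and \<gamma> :: real and l u :: "nat \<Rightarrow> nat list"
  assumes fin: "\<forall>n\<ge>1. finite (D n) \<and> D n \<noteq> {}"
    and digits: "\<forall>n\<ge>1. \<forall>d\<in>D n. d \<noteq> []"
    and bdd: "\<exists>L B. \<forall>n\<ge>1. \<forall>d\<in>D n. length d \<le> L \<and> (\<forall>c\<in>set d. c \<le> B)"
    and gam: "\<gamma> > 1"
    and l_min: "\<forall>n\<ge>1. l n \<in> D n \<and> (\<forall>d\<in>D n. digval \<gamma> (l n) \<le> digval \<gamma> d)"
    and u_max: "\<forall>n\<ge>1. u n \<in> D n \<and> (\<forall>d\<in>D n. digval \<gamma> d \<le> digval \<gamma> (u n))"
    and lower: "gr l \<le> \<gamma>"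
    and upper: "\<gamma> \<le> gr u"
    and gaps: "\<forall>n\<ge>1. maxgap (digval \<gamma> ` D n)
                 \<le> (\<Sum>i. (digval \<gamma> (u (n + i + 1)) - digval \<gamma> (l (n + i + 1)))
                          * \<gamma> powi (- int (i + 1)))"
  shows "\<exists>a. (\<forall>n\<ge>1. a n \<in> D n) \<and> gr a = \<gamma>"
proof -
  obtain L B where LB: "\<forall>n\<ge>1. \<forall>d\<in>D n. length d \<le> L \<and> (\<forall>c\<in>set d. c \<le> B)" using bdd by blast
  define x where "x = 1/\<gamma>"
  have x: "0 < x" "x < 1" using gam by (auto simp: x_def)
  have gx: "\<gamma> = 1/x" using gam by (simp add: x_def)
  define v where "v = digval \<gamma>"
  have v_eq: "v d = (\<Sum>i<length d. real (d!i) * x^i)" for d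
    using gam by (simp add: v_def x_def digval_eq)
  have v_nn: "0 \<le> v d" for d unfolding v_eq using x by (intro sum_nonneg) simp
  have v_bd: "v d \<le> real (L*B)" if "n \<ge> 1" "d \<in> D n" for n d
  proof -
    have "v d \<le> (\<Sum>i<length d. real B)" unfolding v_eq
    proof (rule sum_mono)
      fix i assume "i \<in> {..<length d}"
      then have "d ! i \<le> B" using LB that by (auto simp: nth_mem)
      moreover have "x^i \<le> 1" using x by (simp add: power_le_one)
      ultimately show "real (d!i) * x^i \<le> real B" using x
        by (metis mult_le_one mult.commute mult.right_neutral mult_mono of_nat_0_le_iff of_nat_le_iff zero_le_power less_imp_le)
    qed
    also have "\<dots> \<le> real (L*B)" using LB that by (simp add: mult_right_mono)
    finally show ?thesis .
  qed
  have pw: "\<gamma> powi (- int k) = x^k" for k using gam by (simp add: pw_eq x_def)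
  have Sa: "(\<lambda>m. real (equiv_seq a m) * x^m) sums (\<Sum>k. v (a (Suc k)) * x^(Suc k))"
    and Ka: "equiv_seq a m \<le> L*B"
    if "\<forall>n\<ge>1. a n \<in> D n" for a m
  proof -
    have len: "\<forall>n\<ge>1. length (a n) \<le> L" and ent: "\<forall>n\<ge>1. \<forall>c\<in>set (a n). c \<le> B" using that LB by auto
    show "(\<lambda>m. real (equiv_seq a m) * x^m) sums (\<Sum>k. v (a (Suc k)) * x^(Suc k))"
      unfolding v_eq by (rule series_S[OF x len ent])
    show "equiv_seq a m \<le> L*B" by (rule equiv_seq_bound[OF len ent])
  qed
  have l_in: "\<forall>n\<ge>1. l n \<in> D n" and u_in: "\<forall>n\<ge>1. u n \<in> D n" using l_min u_max by auto
  define fl where "fl = (\<lambda>j. v (l (Suc j)) * x^(Suc j))"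
  define fu where "fu = (\<lambda>j. v (u (Suc j)) * x^(Suc j))"
  have geo: "summable (\<lambda>j. real (L*B) * x^(Suc j))" using x
    by (intro summable_mult summable_mult2) (auto intro!: summable_geometric)
  have vl: "v (l (Suc j)) \<le> real (L*B)" for j by (rule v_bd[of "Suc j"]) (use l_in in auto)
  have vu: "v (u (Suc j)) \<le> real (L*B)" for j by (rule v_bd[of "Suc j"]) (use u_in in auto)
  have sfl: "summable fl"
    by (rule summable_comparison_test[OF _ geo])
       (use vl v_nn x in \<open>auto simp: fl_def intro!: mult_right_mono\<close>)
  have sfu: "summable fu"
    by (rule summable_comparison_test[OF _ geo])
       (use vu v_nn x in \<open>auto simp: fu_def intro!: mult_right_mono\<close>)
  define lam where "lam = (\<lambda>n. \<Sum>k. fl (k+n))"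
  define mu where "mu = (\<lambda>n. \<Sum>k. fu (k+n))"
  have sfl': "summable (\<lambda>k. fl (k+n))" for n using sfl by (simp add: summable_iff_shift)
  have sfu': "summable (\<lambda>k. fu (k+n))" for n using sfu by (simp add: summable_iff_shift)
  have lam_step: "lam n = fl n + lam (Suc n)" for n
    using suminf_split_head[OF sfl'[of n]] by (simp add: lam_def)
  have mu_step: "mu n = fu n + mu (Suc n)" for n
    using suminf_split_head[OF sfu'[of n]] by (simp add: mu_def)
  have tail0: "(\<lambda>n. \<Sum>k. f (k+n)) \<longlonglongrightarrow> 0" if "summable f" for f :: "nat \<Rightarrow> real"
  proof (rule LIMSEQ_I)
    fix r :: real assume "0 < r"
    from suminf_exist_split[OF this that] show "\<exists>no. \<forall>n\<ge>no. norm ((\<Sum>k. f (k+n)) - 0) < r" by simp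
  qed
  have lam0: "lam \<longlonglongrightarrow> 0" using tail0[OF sfl] by (simp add: lam_def)
  have mu0: "mu \<longlonglongrightarrow> 0" using tail0[OF sfu] by (simp add: mu_def)
  define R where "R = (\<lambda>n. \<Sum>i. (v (u (n + i + 1)) - v (l (n + i + 1))) * \<gamma> powi (- int (i + 1)))"
  have gapdiff: "mu n - lam n = x^n * R n" for n
  proof -
    define r where "r = (\<lambda>i. (v (u (n + i + 1)) - v (l (n + i + 1))) * \<gamma> powi (- int (i + 1)))"
    have r_eq: "r k = (fu (k+n) - fl (k+n)) / x^n" for k
      unfolding r_def pw[of "k+1"] using x by (simp add: fu_def fl_def field_simps power_add)
    have sr: "summable r" unfolding r_eq[abs_def]
      by (intro summable_divide summable_diff sfu' sfl')
    have "mu n - lam n = (\<Sum>k. fu (k+n) - fl (k+n))"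
      unfolding mu_def lam_def by (rule suminf_diff[OF sfu' sfl'])
    also have "\<dots> = (\<Sum>k. x^n * r k)" using x by (simp add: r_eq)
    also have "\<dots> = x^n * R n" using suminf_mult[OF sr] by (simp add: R_def r_def)
    finally show ?thesis .
  qed
  have gaps': "maxgap (v ` D n) \<le> R n" if "n \<ge> 1" for n
    using gaps that unfolding R_def v_def by blast
  have Fl: "(\<lambda>m. real (equiv_seq l m) * x^m) sums lam 0"
    using Sa[OF l_in] by (simp add: lam_def fl_def)
  have Fu: "(\<lambda>m. real (equiv_seq u m) * x^m) sums mu 0"
    using Sa[OF u_in] by (simp add: mu_def fu_def)
  have lam_le: "lam 0 \<le> 1"
    by (rule CL[OF Ka[OF l_in] equiv_seq_0 x Fl]) (use lower gx in \<open>simp add: gr_def\<close>)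
  have mu_ge: "1 \<le> mu 0"
    by (rule CU[OF Ka[OF u_in] x Fu]) (use upper gx in \<open>simp add: gr_def\<close>)
  define P where "P = (\<lambda>n p d. d \<in> D n \<and> p + v d * x^n + lam n \<le> 1)"
  define sel where "sel = (\<lambda>n p. SOME d. P n p d \<and> (\<forall>e. P n p e \<longrightarrow> v e \<le> v d))"
  have sel_prop: "P n p (sel n p) \<and> (\<forall>e. P n p e \<longrightarrow> v e \<le> v (sel n p))"
    if n: "n \<ge> 1" and pl: "P n p (l n)" for n p
  proof -
    define Q where "Q = {d. P n p d}"
    have fQ: "finite Q" using fin n by (auto simp: Q_def P_def intro: finite_subset)
    have nQ: "Q \<noteq> {}" using pl by (auto simp: Q_def)
    have "Max (v ` Q) \<in> v ` Q" using fQ nQ by simp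
    then obtain d where d: "d \<in> Q" "v d = Max (v ` Q)" by auto
    have "\<forall>e. P n p e \<longrightarrow> v e \<le> v d" using d fQ by (auto simp: Q_def)
    then have "\<exists>d. P n p d \<and> (\<forall>e. P n p e \<longrightarrow> v e \<le> v d)" using d by (auto simp: Q_def)
    then show ?thesis unfolding sel_def by (rule someI_ex)
  qed
  define ps where "ps = rec_nat 0 (\<lambda>k p. p + v (sel (Suc k) p) * x^(Suc k))"
  have ps0: "ps 0 = 0" by (simp add: ps_def)
  have psS: "ps (Suc k) = ps k + v (sel (Suc k) (ps k)) * x^(Suc k)" for k by (simp add: ps_def)
  have inv: "ps n + lam n \<le> 1 \<and> 1 \<le> ps n + mu n" for n
  proof (induction n)
    case 0 then show ?case using lam_le mu_ge by (simp add: ps0)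
  next
    case (Suc n)
    define N where "N = Suc n"
    define p where "p = ps n"
    define d where "d = sel N p"
    have N1: "N \<ge> 1" by (simp add: N_def)
    have ln: "lam n = v (l N) * x^N + lam N" using lam_step[of n] by (simp add: fl_def N_def)
    have un: "mu n = v (u N) * x^N + mu N" using mu_step[of n] by (simp add: fu_def N_def)
    have pl: "P N p (l N)" using Suc.IH l_in N1 ln by (simp add: P_def p_def)
    have sp: "P N p d" "\<forall>e. P N p e \<longrightarrow> v e \<le> v d" using sel_prop[OF N1 pl] by (auto simp: d_def)
    have psN: "ps N = p + v d * x^N" by (simp add: N_def psS p_def d_def)
    have low: "ps N + lam N \<le> 1" using sp(1) psN by (simp add: P_def)
    have up: "1 \<le> ps N + mu N"
    proof (cases "v (u N) \<le> v d")
      case True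
      then have "v (u N) * x^N \<le> v d * x^N" using x by (simp add: mult_right_mono)
      then show ?thesis using Suc.IH un psN by (simp add: p_def)
    next
      case False
      define G where "G = {e \<in> D N. v d < v e}"
      have fG: "finite G" using fin N1 by (auto simp: G_def)
      have uG: "u N \<in> G" using False u_in N1 by (auto simp: G_def)
      have "Min (v ` G) \<in> v ` G" using fG uG by (intro Min_in) auto
      then obtain e0 where e0: "e0 \<in> G" "v e0 = Min (v ` G)" by auto
      have e0min: "\<forall>e\<in>G. v e0 \<le> v e" using e0 fG by auto
      have dD: "d \<in> D N" using sp(1) by (simp add: P_def)
      have nP: "\<not> P N p e0" using sp(2) e0(1) by (force simp: G_def)
      then have big: "1 < p + v e0 * x^N + lam N" using e0(1) by (auto simp: P_def G_def)
      have "v e0 - v d \<le> maxgap (v ` D N)"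
      proof (rule gap_le)
        show "finite (v ` D N)" using fin N1 by auto
        show "v d \<in> v ` D N" using dD by auto
        show "v e0 \<in> v ` D N" using e0(1) by (auto simp: G_def)
        show "v d < v e0" using e0(1) by (auto simp: G_def)
        show "\<not> (\<exists>z\<in>v ` D N. v d < z \<and> z < v e0)"
          using e0min by (force simp: G_def)
      qed
      also have "\<dots> \<le> R N" using gaps'[OF N1] .
      finally have "(v e0 - v d) * x^N \<le> R N * x^N" using x by (simp add: mult_right_mono)
      then have "v e0 * x^N \<le> v d * x^N + (mu N - lam N)" using gapdiff[of N] by (simp add: algebra_simps)
      then show ?thesis using big psN by simp
    qed
    show ?case using low up by (simp add: N_def)
  qed
  define a where "a = (\<lambda>n. sel n (ps (n - 1)))"
  have aS: "a (Suc k) = sel (Suc k) (ps k)" for k by (simp add: a_def)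
  have a_in: "\<forall>n\<ge>1. a n \<in> D n"
  proof (intro allI impI)
    fix n :: nat assume n: "n \<ge> 1"
    then obtain k where k: "n = Suc k" by (cases n) auto
    have ln: "lam k = v (l n) * x^n + lam n" using lam_step[of k] by (simp add: fl_def k)
    have "P n (ps k) (l n)" using inv[of k] l_in n ln by (simp add: P_def)
    then have "P n (ps k) (sel n (ps k))" using sel_prop n by blast
    then show "a n \<in> D n" by (simp add: P_def a_def k)
  qed
  have ps_sum: "ps n = (\<Sum>k<n. v (a (Suc k)) * x^(Suc k))" for n
    by (induction n) (simp_all add: ps0 psS aS)
  have "ps \<longlonglongrightarrow> 1"
  proof (rule tendsto_sandwich[of "\<lambda>n. 1 - mu n" _ _ "\<lambda>n. 1 - lam n"])
    have "\<forall>n. 1 - mu n \<le> ps n" using inv by (simp add: algebra_simps)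
    then show "eventually (\<lambda>n. 1 - mu n \<le> ps n) sequentially" by (rule always_eventually)
    have "\<forall>n. ps n \<le> 1 - lam n" using inv by (simp add: algebra_simps)
    then show "eventually (\<lambda>n. ps n \<le> 1 - lam n) sequentially" by (rule always_eventually)
    show "(\<lambda>n. 1 - mu n) \<longlonglongrightarrow> 1" using tendsto_diff[OF tendsto_const mu0, of 1] by simp
    show "(\<lambda>n. 1 - lam n) \<longlonglongrightarrow> 1" using tendsto_diff[OF tendsto_const lam0, of 1] by simp
  qed
  then have s1: "(\<lambda>k. v (a (Suc k)) * x^(Suc k)) sums 1"
  proof -
    have "ps = (\<lambda>n. \<Sum>k<n. v (a (Suc k)) * x^(Suc k))" using ps_sum by (rule ext)
    with \<open>ps \<longlonglongrightarrow> 1\<close> show ?thesis unfolding sums_def by simp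
  qed
  have "(\<lambda>m. real (equiv_seq a m) * x^m) sums 1"
    using Sa[OF a_in] sums_unique[OF s1] by simp
  then have "gr_seq (equiv_seq a) = 1/x"
    by (rule EQ[of "equiv_seq a" "L*B", OF Ka[OF a_in] equiv_seq_0 x])
  then have "gr a = \<gamma>" using gx by (simp add: gr_def)
  with a_in show ?thesis by blast
qed

end
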